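(* Let $\alpha$ be a countable ordinal and let $(x_n)_n$ be a bounded sequence in $X_\alpha$. Suppose there are $\varepsilon>0$, an ordinal $\beta<\alpha$ and a block sequence $(s_n)_n$ of elements of $\mathcal S_\beta$ (i.e. $\max s_n<\min s_{n+1}$) such that $\sum_{k\in s_n}|(x_n)_k|\ge\varepsilon$ for every $n$. Then $\{x_n\}_n$ is not a Banach-Saks set.
   Context: A subset $A$ of a Banach space is a Banach-Saks set if every sequence in $A$ has a subsequence whose Ces\`aro means converge in norm. For a family $\mathcal F$ of finite subsets of $\mathbb N$, $X_{\mathcal F}$ is the completion of $c_{00}(\mathbb N)$ under $\|x\|_{\mathcal F}=\max\{\|x\|_\infty,\sup_{s\in\mathcal F}\sum_{n\in s}|(x)_n|\}$, $(x)_k$ denoting the $k$-th coordinate. The Schreier family is $\mathcal S=\{s\subseteq\mathbb N: \#s\le\min s\}$; $\mathcal F\otimes\mathcal G=\{s_0\cup\dots\cup s_n: s_0<\dots<s_n \text{ in }\mathcal F,\ \{\min s_i\}_{i\le n}\in\mathcal G\}$ with $s<t$ meaning $\max s<\min t$. For each countable limit ordinal $\alpha$ a strictly increasing sequence $(\beta_n^{(\alpha)})_n$ with supremum $\alpha$ is fixed; $\mathcal S_0=\{s:\#s\le1\}$, $\mathcal S_{\alpha+1}=\mathcal S_\alpha\otimes\mathcal S$, and for limit $\alpha$, $\mathcal S_\alpha=\bigcup_n\{s\in\mathcal S_{\beta_n^{(\alpha)}}: s\subseteq[n+1,\infty)\}$. $X_\alpha:=X_{\mathcal S_\alpha}$.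 *)

theory Defs
  imports "HOL-Analysis.Analysis"
begin

text \<open>Vectors are real sequences indexed by nat. The norm is valued in ereal so that it
is defined (possibly infinite) for every sequence.\<close>

definition normF :: "nat set set \<Rightarrow> (nat \<Rightarrow> real) \<Rightarrow> ereal" where
  "normF F x = max (SUP k. ereal \<bar>x k\<bar>) (SUP s\<in>F. ereal (\<Sum>k\<in>s. \<bar>x k\<bar>))"

text \<open>Elements of the completion X_F of c00 under normF: sequences whose tails
(the part after the first n coordinates) tend to 0 in norm.\<close>

definition inX :: "nat set set \<Rightarrow> (nat \<Rightarrow> real) \<Rightarrow> bool" where
  "inX F x \<longleftrightarrow> ((\<lambda>n. normF F (\<lambda>k. if k < n then 0 else x k)) \<longlonglongrightarrow> 0)"

definition banach_saks_set :: "nat set set \<Rightarrow> (nat \<Rightarrow> real) set \<Rightarrow> bool" where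
  "banach_saks_set F A \<longleftrightarrow>
     (\<forall>f :: nat \<Rightarrow> nat \<Rightarrow> real. (\<forall>n. f n \<in> A) \<longrightarrow>
        (\<exists>\<phi> y. strict_mono \<phi> \<and> inX F y \<and>
           ((\<lambda>m. normF F (\<lambda>k. (\<Sum>i<Suc m. f (\<phi> i) k) / real (Suc m) - y k)) \<longlonglongrightarrow> 0)))"

definition schreier0 :: "nat set set" where
  "schreier0 = {s. finite s \<and> card s \<le> 1}"

definition schreier :: "nat set set" where
  "schreier = {s. finite s \<and> (s = {} \<or> card s \<le> Min s)}"

definition otimes :: "nat set set \<Rightarrow> nat set set \<Rightarrow> nat set set" where
  "otimes F G = {t. t = {} \<or>
     (\<exists>(n::nat) (ss :: nat \<Rightarrow> nat set).
        (\<forall>i\<le>n. ss i \<in> F \<and> ss i \<noteq> {}) \<and>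
        (\<forall>i<n. \<forall>a\<in>ss i. \<forall>b\<in>ss (Suc i). a < b) \<and>
        {Min (ss i) | i. i \<le> n} \<in> G \<and>
        t = (\<Union>i\<le>n. ss i))}"

definition is_zero_ord :: "'o::wellorder \<Rightarrow> bool" where
  "is_zero_ord a \<longleftrightarrow> (\<forall>g. \<not> g < a)"

definition is_succ_of :: "'o::wellorder \<Rightarrow> 'o \<Rightarrow> bool" where
  "is_succ_of a b \<longleftrightarrow> b < a \<and> \<not> (\<exists>g. b < g \<and> g < a)"

definition is_limit_ord :: "'o::wellorder \<Rightarrow> bool" where
  "is_limit_ord a \<longleftrightarrow> \<not> is_zero_ord a \<and> \<not> (\<exists>b. is_succ_of a b)"

text \<open>fs a is the fixed sequence (beta_n^(a))_n for a limit ordinal a.\<close>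

definition fund_seqs_ok :: "('o::wellorder \<Rightarrow> nat \<Rightarrow> 'o) \<Rightarrow> 'o \<Rightarrow> bool" where
  "fund_seqs_ok fs a \<longleftrightarrow>
     (\<forall>g\<le>a. is_limit_ord g \<longrightarrow>
        strict_mono (fs g) \<and> (\<forall>n. fs g n < g) \<and> (\<forall>d<g. \<exists>n. d < fs g n))"

definition schreier_step ::
  "('o::wellorder \<Rightarrow> nat \<Rightarrow> 'o) \<Rightarrow> ('o \<Rightarrow> nat set set) \<Rightarrow> 'o \<Rightarrow> nat set set" where
  "schreier_step fs S a =
     (if is_zero_ord a then schreier0
      else if (\<exists>b. is_succ_of a b) then otimes (S (THE b. is_succ_of a b)) schreier
      else (\<Union>n. {s \<in> S (fs a n). s \<subseteq> {Suc n..}}))"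

definition schreier_fam :: "('o::wellorder \<Rightarrow> nat \<Rightarrow> 'o) \<Rightarrow> 'o \<Rightarrow> nat set set" where
  "schreier_fam fs = wfrec {(x, y). x < y} (schreier_step fs)"

end

theory Submission
  imports Defs "HOL-Library.Diagonal_Subsequence"
begin


abbreviation "Rlt \<equiv> {(x::'o::wellorder, y). x < y}"

lemma succ_unique:
  fixes a b c :: "'o::wellorder"
  assumes "is_succ_of a b" "is_succ_of a c" shows "b = c"
  using assms unfolding is_succ_of_def by (metis linorder_neqE)

lemma the_succ: "is_succ_of a b \<Longrightarrow> (THE b. is_succ_of a b) = b"
  using succ_unique by blast

lemma schreier_fam_unfold:
  fixes fs :: "'o::wellorder \<Rightarrow> nat \<Rightarrow> 'o"
  assumes ok: "fund_seqs_ok fs \<alpha>" and le: "a \<le> \<alpha>"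
  shows "schreier_fam fs a = schreier_step fs (schreier_fam fs) a"
proof -
  have w: "wf (Rlt::('o\<times>'o) set)" by (rule wf)
  have 1: "schreier_fam fs a = schreier_step fs (cut (schreier_fam fs) Rlt a) a"
    unfolding schreier_fam_def by (rule wfrec[OF w])
  have cut: "\<And>b. b < a \<Longrightarrow> cut (schreier_fam fs) Rlt a b = schreier_fam fs b"
    by (simp add: cut_apply)
  show ?thesis
  proof (cases "is_zero_ord a")
    case True then show ?thesis using 1 by (simp add: schreier_step_def)
  next
    case nz: False
    show ?thesis
    proof (cases "\<exists>b. is_succ_of a b")
      case True
      then obtain b where b: "is_succ_of a b" by blast
      then have "b < a" by (simp add: is_succ_of_def)
      have ex: "Ex (is_succ_of a)" using b by blast
      have th: "The (is_succ_of a) = b" using the_succ[OF b] by simp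
      show ?thesis using 1 nz cut[OF \<open>b < a\<close>] unfolding schreier_step_def
        by (simp only: ex th if_True if_False)
    next
      case False
      then have lim: "is_limit_ord a" using nz by (simp add: is_limit_ord_def)
      then have "\<And>n. fs a n < a" using ok le by (simp add: fund_seqs_ok_def)
      have ne: "Ex (is_succ_of a) = False" using False by blast
      then show ?thesis using 1 nz cut \<open>\<And>n. fs a n < a\<close> unfolding schreier_step_def
        by (simp only: ne if_True if_False)
    qed
  qed
qed

definition osucc :: "'o::wellorder \<Rightarrow> 'o" where "osucc b = (LEAST g. b < g)"

lemma osucc_props:
  fixes b a :: "'o::wellorder"
  assumes "b < a"
  shows "is_succ_of (osucc b) b" "osucc b \<le> a" "\<And>g. b < g \<Longrightarrow> osucc b \<le> g"
proof -
  show le: "\<And>g. b < g \<Longrightarrow> osucc b \<le> g" unfolding osucc_def by (rule Least_le)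
  have "b < osucc b" unfolding osucc_def by (rule LeastI[of "\<lambda>g. b < g", OF assms])
  then show "is_succ_of (osucc b) b" unfolding is_succ_of_def using le by (meson not_le)
  show "osucc b \<le> a" using le assms by blast
qed

lemma main_comb:
  fixes fs :: "'o::wellorder \<Rightarrow> nat \<Rightarrow> 'o"
  assumes ok: "fund_seqs_ok fs \<alpha>"
  shows "\<gamma> \<le> \<alpha> \<Longrightarrow> \<beta> < \<gamma> \<Longrightarrow> \<exists>N. \<forall>u\<in>schreier_fam fs (osucc \<beta>). finite u \<longrightarrow> (\<forall>a\<in>u. N \<le> a) \<longrightarrow> u \<in> schreier_fam fs \<gamma>"
proof (induction \<gamma> arbitrary: \<beta> rule: less_induct)
  case (less \<gamma>)
  have unf: "schreier_fam fs \<gamma> = schreier_step fs (schreier_fam fs) \<gamma>"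
    using schreier_fam_unfold[OF ok less.prems(1)] .
  have nz: "\<not> is_zero_ord \<gamma>" using less.prems(2) by (auto simp: is_zero_ord_def)
  show ?case
  proof (cases "\<exists>d. is_succ_of \<gamma> d")
    case True
    then obtain d where d: "is_succ_of \<gamma> d" by blast
    have Sg: "schreier_fam fs \<gamma> = otimes (schreier_fam fs d) schreier"
    proof -
      have ex: "Ex (is_succ_of \<gamma>)" using d by blast
      have th: "The (is_succ_of \<gamma>) = d" using the_succ[OF d] by simp
      show ?thesis using unf nz unfolding schreier_step_def by (simp only: ex th if_True if_False)
    qed
    have "\<beta> \<le> d" using d less.prems(2) unfolding is_succ_of_def by (meson not_le)
    show ?thesis
    proof (cases "\<beta> = d")
      case True
      have "osucc \<beta> = \<gamma>" using osucc_props[OF less.prems(2)] d True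
        unfolding is_succ_of_def by (meson antisym not_le)
      then show ?thesis by blast
    next
      case False
      with \<open>\<beta> \<le> d\<close> have bd: "\<beta> < d" by simp
      have dg: "d < \<gamma>" using d by (simp add: is_succ_of_def)
      obtain N where N: "\<forall>u\<in>schreier_fam fs (osucc \<beta>). finite u \<longrightarrow> (\<forall>a\<in>u. N \<le> a) \<longrightarrow> u \<in> schreier_fam fs d"
        using less.IH[OF dg _ bd] dg less.prems(1) by force
      show ?thesis
      proof (intro exI[of _ "max N 1"] ballI impI)
        fix u assume u: "u \<in> schreier_fam fs (osucc \<beta>)" "finite u" "\<forall>a\<in>u. max N 1 \<le> a"
        then have ud: "u \<in> schreier_fam fs d" using N by auto
        show "u \<in> schreier_fam fs \<gamma>"
        proof (cases "u = {}")
          case True then show ?thesis unfolding Sg otimes_def by blast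
        next
          case False
          then have "Min u \<in> u" using u(2) by simp
          then have "1 \<le> Min u" using u(3) by auto
          then have sch: "{Min u} \<in> schreier" unfolding schreier_def by simp
          have "{Min ((\<lambda>_. u) i) | i. i \<le> (0::nat)} = {Min u}" by auto
          then show ?thesis unfolding Sg otimes_def
            apply (simp only: mem_Collect_eq)
            apply (rule disjI2)
            apply (rule exI[of _ 0], rule exI[of _ "\<lambda>_. u"])
            using ud False sch by auto
        qed
      qed
    qed
  next
    case False
    then have lim: "is_limit_ord \<gamma>" using nz by (simp add: is_limit_ord_def)
    then have fsp: "strict_mono (fs \<gamma>)" "\<forall>n. fs \<gamma> n < \<gamma>" "\<forall>d<\<gamma>. \<exists>n. d < fs \<gamma> n"
      using ok less.prems(1) by (auto simp: fund_seqs_ok_def)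
    have Sg: "schreier_fam fs \<gamma> = (\<Union>n. {s \<in> schreier_fam fs (fs \<gamma> n). s \<subseteq> {Suc n..}})"
    proof -
      have ne: "Ex (is_succ_of \<gamma>) = False" using False by blast
      show ?thesis using unf nz unfolding schreier_step_def by (simp only: ne if_True if_False)
    qed
    obtain n where n: "\<beta> < fs \<gamma> n" using fsp less.prems(2) by blast
    have dg: "fs \<gamma> n < \<gamma>" using fsp by blast
    obtain N where N: "\<forall>u\<in>schreier_fam fs (osucc \<beta>). finite u \<longrightarrow> (\<forall>a\<in>u. N \<le> a) \<longrightarrow> u \<in> schreier_fam fs (fs \<gamma> n)"
      using less.IH[OF dg _ n] dg less.prems(1) by force
    show ?thesis
    proof (intro exI[of _ "max N (Suc n)"] ballI impI)
      fix u assume u: "u \<in> schreier_fam fs (osucc \<beta>)" "finite u" "\<forall>a\<in>u. max N (Suc n) \<le> a"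
      then have "u \<in> schreier_fam fs (fs \<gamma> n)" using N by auto
      moreover have "u \<subseteq> {Suc n..}" using u(3) by auto
      ultimately show "u \<in> schreier_fam fs \<gamma>" unfolding Sg by blast
    qed
  qed
qed

lemma comb_final:
  fixes fs :: "'o::wellorder \<Rightarrow> nat \<Rightarrow> 'o"
  assumes ok: "fund_seqs_ok fs \<alpha>" and ba: "\<beta> < \<alpha>"
  shows "\<exists>N. \<forall>n ss. (\<forall>i\<le>n. ss i \<in> schreier_fam fs \<beta> \<and> ss i \<noteq> {} \<and> finite (ss i)) \<longrightarrow>
     (\<forall>i<n. \<forall>a\<in>ss i. \<forall>b\<in>ss (Suc i). a < b) \<longrightarrow>
     (\<forall>i\<le>n. \<forall>a\<in>ss i. N \<le> a \<and> Suc n \<le> a) \<longrightarrow> (\<Union>i\<le>n. ss i) \<in> schreier_fam fs \<alpha>"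
proof -
  obtain N where N: "\<forall>u\<in>schreier_fam fs (osucc \<beta>). finite u \<longrightarrow> (\<forall>a\<in>u. N \<le> a) \<longrightarrow> u \<in> schreier_fam fs \<alpha>"
    using main_comb[OF ok order_refl ba] by blast
  have sb: "is_succ_of (osucc \<beta>) \<beta>" "osucc \<beta> \<le> \<alpha>" using osucc_props[OF ba] by auto
  have nz: "\<not> is_zero_ord (osucc \<beta>)" using sb(1) by (auto simp: is_zero_ord_def is_succ_of_def)
  have S1: "schreier_fam fs (osucc \<beta>) = otimes (schreier_fam fs \<beta>) schreier"
  proof -
    have ex: "Ex (is_succ_of (osucc \<beta>))" using sb by blast
    have th: "The (is_succ_of (osucc \<beta>)) = \<beta>" using the_succ[OF sb(1)] by simp
    show ?thesis using schreier_fam_unfold[OF ok sb(2)] nz unfolding schreier_step_def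
      by (simp only: ex th if_True if_False)
  qed
  show ?thesis
  proof (intro exI[of _ N] allI impI)
    fix n and ss :: "nat \<Rightarrow> nat set"
    assume h1: "\<forall>i\<le>n. ss i \<in> schreier_fam fs \<beta> \<and> ss i \<noteq> {} \<and> finite (ss i)"
      and h2: "\<forall>i<n. \<forall>a\<in>ss i. \<forall>b\<in>ss (Suc i). a < b"
      and h3: "\<forall>i\<le>n. \<forall>a\<in>ss i. N \<le> a \<and> Suc n \<le> a"
    let ?u = "\<Union>i\<le>n. ss i"
    have fin: "finite ?u" using h1 by auto
    have geN: "\<forall>a\<in>?u. N \<le> a" using h3 by auto
    let ?M = "{Min (ss i) | i. i \<le> n}"
    have Meq: "?M = (\<lambda>i. Min (ss i)) ` {..n}" by auto
    have finM: "finite ?M" unfolding Meq by simp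
    have cardM: "card ?M \<le> Suc n" unfolding Meq using card_image_le[of "{..n}" "\<lambda>i. Min (ss i)"] by simp
    have neM: "?M \<noteq> {}" by auto
    have minM: "\<forall>a\<in>?M. Suc n \<le> a"
    proof
      fix a assume "a \<in> ?M"
      then obtain i where i: "i \<le> n" "a = Min (ss i)" by auto
      then have "a \<in> ss i" using h1 by auto
      then show "Suc n \<le> a" using h3 i by auto
    qed
    have "Suc n \<le> Min ?M" using minM finM neM by auto
    then have sch: "?M \<in> schreier" unfolding schreier_def using finM cardM by auto
    have "?u \<in> otimes (schreier_fam fs \<beta>) schreier"
      unfolding otimes_def
      apply (simp only: mem_Collect_eq)
      apply (rule disjI2)
      apply (rule exI[of _ n], rule exI[of _ ss])
      using h1 h2 sch by blast
    then show "?u \<in> schreier_fam fs \<alpha>" using N S1 fin geN by auto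
  qed
qed



lemma coord_bound:
  fixes W Xs :: "nat \<Rightarrow> real" and yk :: real and i M :: nat
  assumes iM: "i \<le> M" and W: "\<And>j. W j = Xs j - yk"
  shows "\<bar>\<Sum>j<Suc M. W j\<bar> \<ge> \<bar>Xs i\<bar> - (\<Sum>j<i. \<bar>Xs j\<bar>) - (\<Sum>j\<in>{i<..M}. \<bar>W j\<bar>) - real (Suc M) * \<bar>yk\<bar>"
proof -
  have split: "{..<Suc M} = {..<i} \<union> ({i} \<union> {i<..M})" using iM by auto
  have s: "(\<Sum>j<Suc M. W j) = (\<Sum>j<i. W j) + (W i + (\<Sum>j\<in>{i<..M}. W j))"
    unfolding split by (subst sum.union_disjoint, auto)+
  have a1: "\<bar>\<Sum>j<i. W j\<bar> \<le> (\<Sum>j<i. \<bar>Xs j\<bar>) + real i * \<bar>yk\<bar>"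
  proof -
    have "\<bar>\<Sum>j<i. W j\<bar> \<le> (\<Sum>j<i. \<bar>W j\<bar>)" by (rule sum_abs)
    also have "\<dots> \<le> (\<Sum>j<i. \<bar>Xs j\<bar> + \<bar>yk\<bar>)" by (rule sum_mono) (simp add: W abs_triangle_ineq4)
    also have "\<dots> = (\<Sum>j<i. \<bar>Xs j\<bar>) + real i * \<bar>yk\<bar>" by (simp add: sum.distrib)
    finally show ?thesis .
  qed
  have a2: "\<bar>\<Sum>j\<in>{i<..M}. W j\<bar> \<le> (\<Sum>j\<in>{i<..M}. \<bar>W j\<bar>)" by (rule sum_abs)
  have a3: "\<bar>W i\<bar> \<ge> \<bar>Xs i\<bar> - \<bar>yk\<bar>" using W[of i] by linarith
  have a4: "real i * \<bar>yk\<bar> + \<bar>yk\<bar> \<le> real (Suc M) * \<bar>yk\<bar>"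
    using iM by (simp add: algebra_simps mult_left_mono)
  show ?thesis unfolding s using a1 a2 a3 a4 by linarith
qed

lemma geo_bound: "finite A \<Longrightarrow> (\<Sum>j\<in>A. (1/2::real)^j) \<le> 2"
proof -
  assume "finite A"
  have "(\<Sum>j\<in>A. (1/2::real)^j) \<le> (\<Sum>j. (1/2::real)^j)"
    by (rule sum_le_suminf) (auto intro: summable_geometric \<open>finite A\<close>)
  also have "\<dots> = 2" using suminf_geometric[of "1/2::real"] by simp
  finally show ?thesis .
qed

lemma cesaro:
  fixes u :: "nat \<Rightarrow> real"
  assumes lim: "u \<longlonglongrightarrow> L"
  shows "(\<lambda>m. (\<Sum>i<Suc m. u i) / real (Suc m)) \<longlonglongrightarrow> L"
proof -
  define v where "v i = u i - L" for i
  have v0: "v \<longlonglongrightarrow> 0" using lim unfolding v_def by (simp add: LIM_zero)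
  have eq: "(\<Sum>i<Suc m. u i) / real (Suc m) = L + (\<Sum>i<Suc m. v i) / real (Suc m)" for m
    by (simp add: v_def sum_subtractf field_simps)
  have "(\<lambda>m. (\<Sum>i<Suc m. v i) / real (Suc m)) \<longlonglongrightarrow> 0"
  proof (rule LIMSEQ_I)
    fix e :: real assume e: "0 < e"
    obtain N where N: "\<forall>i\<ge>N. norm (v i) < e/2" using LIMSEQ_D[OF v0, of "e/2"] e by auto
    define C where "C = (\<Sum>i<N. \<bar>v i\<bar>)"
    have C0: "C \<ge> 0" unfolding C_def by (simp add: sum_nonneg)
    obtain K :: nat where K: "2 * C / e < real K" using reals_Archimedean2 by blast
    show "\<exists>no. \<forall>m\<ge>no. norm ((\<Sum>i<Suc m. v i) / real (Suc m) - 0) < e"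
    proof (intro exI[of _ "max N K"] allI impI)
      fix m assume m: "max N K \<le> m"
      have sp: "{..<Suc m} = {..<N} \<union> {N..<Suc m}" using m by auto
      have "\<bar>\<Sum>i<Suc m. v i\<bar> \<le> (\<Sum>i<Suc m. \<bar>v i\<bar>)" by (rule sum_abs)
      also have "\<dots> = C + (\<Sum>i\<in>{N..<Suc m}. \<bar>v i\<bar>)" unfolding sp C_def
        by (subst sum.union_disjoint) auto
      also have "(\<Sum>i\<in>{N..<Suc m}. \<bar>v i\<bar>) \<le> (\<Sum>i\<in>{N..<Suc m}. e/2)"
        by (rule sum_mono) (use N in auto)
      also have "\<dots> \<le> real (Suc m) * (e/2)" using e by simp
      finally have b: "\<bar>\<Sum>i<Suc m. v i\<bar> \<le> C + real (Suc m) * (e/2)" by simp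
      have "2 * C < e * real K" using K e by (simp add: field_simps)
      also have "\<dots> \<le> e * real (Suc m)" using m e by simp
      finally have c: "C < real (Suc m) * (e/2)" by (simp add: algebra_simps)
      have "\<bar>\<Sum>i<Suc m. v i\<bar> < real (Suc m) * e" using b c by linarith
      then show "norm ((\<Sum>i<Suc m. v i) / real (Suc m) - 0) < e"
        by (simp add: divide_less_eq mult.commute)
    qed
  qed
  then have "(\<lambda>m. L + (\<Sum>i<Suc m. v i) / real (Suc m)) \<longlonglongrightarrow> L + 0" by (intro tendsto_add) auto
  then show ?thesis unfolding eq by simp
qed

lemma normF_sum_le:
  assumes "t \<in> F" shows "ereal (\<Sum>k\<in>t. \<bar>v k\<bar>) \<le> normF F v"
proof -
  have "ereal (\<Sum>k\<in>t. \<bar>v k\<bar>) \<le> (SUP s\<in>F. ereal (\<Sum>k\<in>s. \<bar>v k\<bar>))" using assms by (rule SUP_upper2) simp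
  then show ?thesis unfolding normF_def by (meson max.coboundedI2)
qed

lemma normF_coord_le: "ereal \<bar>v k\<bar> \<le> normF F v"
proof -
  have "ereal \<bar>v k\<bar> \<le> (SUP k. ereal \<bar>v k\<bar>)" by (rule SUP_upper) simp
  then show ?thesis unfolding normF_def by (meson max.coboundedI1)
qed

lemma inX_tail:
  assumes "inX F v" "0 < \<delta>"
  shows "\<exists>L. \<forall>t\<in>F. (\<forall>a\<in>t. L \<le> a) \<longrightarrow> (\<Sum>k\<in>t. \<bar>v k\<bar>) < \<delta>"
proof -
  have "\<forall>\<^sub>F n in sequentially. normF F (\<lambda>k. if k < n then 0 else v k) < ereal \<delta>"
    using assms unfolding inX_def by (intro order_tendstoD(2)) auto
  then obtain L where L: "normF F (\<lambda>k. if k < L then 0 else v k) < ereal \<delta>"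
    by (auto simp: eventually_sequentially)
  show ?thesis
  proof (intro exI[of _ L] ballI impI)
    fix t assume t: "t \<in> F" "\<forall>a\<in>t. L \<le> a"
    have "(\<Sum>k\<in>t. \<bar>v k\<bar>) = (\<Sum>k\<in>t. \<bar>(if k < L then 0 else v k)\<bar>)"
      by (rule sum.cong) (use t in auto)
    then have "ereal (\<Sum>k\<in>t. \<bar>v k\<bar>) < ereal \<delta>"
      using normF_sum_le[OF t(1), of "\<lambda>k. if k < L then 0 else v k"] L by (metis le_less_trans)
    then show "(\<Sum>k\<in>t. \<bar>v k\<bar>) < \<delta>" by simp
  qed
qed

lemma normF_lim_small:
  assumes "(\<lambda>m. normF F (w m)) \<longlonglongrightarrow> 0" "0 < \<delta>"
  shows "\<exists>m0. \<forall>m\<ge>m0. normF F (w m) < ereal \<delta>"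
proof -
  have "\<forall>\<^sub>F n in sequentially. normF F (w n) < ereal \<delta>"
    using assms by (intro order_tendstoD(2)) auto
  then show ?thesis by (auto simp: eventually_sequentially)
qed

lemma normF_lim_coord:
  assumes "(\<lambda>m. normF F (w m)) \<longlonglongrightarrow> 0"
  shows "(\<lambda>m. w m k) \<longlonglongrightarrow> 0"
proof (rule LIMSEQ_I)
  fix r :: real assume "0 < r"
  obtain m0 where "\<forall>m\<ge>m0. normF F (w m) < ereal r" using normF_lim_small[OF assms \<open>0<r\<close>] by blast
  then have "\<forall>m\<ge>m0. ereal \<bar>w m k\<bar> < ereal r" using normF_coord_le[of "w _" k F] by (meson le_less_trans)
  then show "\<exists>no. \<forall>n\<ge>no. norm (w n k - 0) < r" by auto
qed



lemma contra:
  fixes F Fb :: "nat set set" and X :: "nat \<Rightarrow> nat \<Rightarrow> real" and T :: "nat \<Rightarrow> nat set"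
    and z :: "nat \<Rightarrow> real" and \<epsilon> :: real
  assumes eps: "0 < \<epsilon>"
    and conv: "\<forall>k. (\<lambda>n. X n k) \<longlonglongrightarrow> z k"
    and A: "\<forall>p q. p < q \<longrightarrow> (\<Sum>k\<in>T q. \<bar>X p k\<bar>) \<le> \<epsilon>/8 * (1/2)^p"
    and B: "\<forall>p q. p < q \<longrightarrow> (\<Sum>k\<in>T p. \<bar>X q k - z k\<bar>) \<le> \<epsilon>/8 * (1/2)^q"
    and big: "\<forall>n. (\<Sum>k\<in>T n. \<bar>X n k\<bar>) \<ge> \<epsilon>"
    and Tfin: "\<forall>n. finite (T n) \<and> T n \<noteq> {} \<and> T n \<in> Fb"
    and Tsucc: "\<forall>p q. p < q \<longrightarrow> (\<forall>a\<in>T p. \<forall>b\<in>T q. a < b)"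
    and Tge: "\<forall>n. \<forall>a\<in>T n. n \<le> a"
    and comb: "\<exists>N. \<forall>n ss. (\<forall>i\<le>n. ss i \<in> Fb \<and> ss i \<noteq> {} \<and> finite (ss i)) \<longrightarrow>
     (\<forall>i<n. \<forall>a\<in>ss i. \<forall>b\<in>ss (Suc i). a < b) \<longrightarrow>
     (\<forall>i\<le>n. \<forall>a\<in>ss i. N \<le> a \<and> Suc n \<le> a) \<longrightarrow> (\<Union>i\<le>n. ss i) \<in> F"
    and phi: "strict_mono \<phi>" and yX: "inX F y"
    and lim: "(\<lambda>m. normF F (\<lambda>k. (\<Sum>i<Suc m. X (\<phi> i) k) / real (Suc m) - y k)) \<longlonglongrightarrow> 0"
  shows False
proof -
  define avg where "avg m k = (\<Sum>i<Suc m. X (\<phi> i) k) / real (Suc m)" for m k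
  have yz: "y k = z k" for k
  proof -
    have 1: "(\<lambda>m. avg m k - y k) \<longlonglongrightarrow> 0"
      using normF_lim_coord[of F "\<lambda>m k. avg m k - y k" k] lim unfolding avg_def by simp
    have "(\<lambda>n. X (\<phi> n) k) \<longlonglongrightarrow> z k"
      using LIMSEQ_subseq_LIMSEQ[OF conv[rule_format, of k] phi] by (simp add: o_def)
    then have "(\<lambda>m. avg m k) \<longlonglongrightarrow> z k" unfolding avg_def by (rule cesaro)
    then have "(\<lambda>m. avg m k - y k) \<longlonglongrightarrow> z k - y k" by (intro tendsto_diff) auto
    with 1 have "z k - y k = 0" using LIMSEQ_unique by blast
    then show ?thesis by simp
  qed
  define \<delta> where "\<delta> = \<epsilon>/16"
  have d0: "0 < \<delta>" using eps by (simp add: \<delta>_def)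
  obtain m1 where m1: "\<forall>m\<ge>m1. normF F (\<lambda>k. avg m k - y k) < ereal \<delta>"
    using normF_lim_small[OF _ d0, of F "\<lambda>m k. avg m k - y k"] lim unfolding avg_def by auto
  obtain L where L: "\<forall>t\<in>F. (\<forall>a\<in>t. L \<le> a) \<longrightarrow> (\<Sum>k\<in>t. \<bar>y k\<bar>) < \<delta>"
    using inX_tail[OF yX d0] by blast
  obtain N where N: "\<forall>n ss. (\<forall>i\<le>n. ss i \<in> Fb \<and> ss i \<noteq> {} \<and> finite (ss i)) \<longrightarrow>
     (\<forall>i<n. \<forall>a\<in>ss i. \<forall>b\<in>ss (Suc i). a < b) \<longrightarrow>
     (\<forall>i\<le>n. \<forall>a\<in>ss i. N \<le> a \<and> Suc n \<le> a) \<longrightarrow> (\<Union>i\<le>n. ss i) \<in> F" using comb by blast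
  define m where "m = max m1 (max L N)"
  define M where "M = m + Suc m"
  define I where "I = {Suc m..M}"
  define U where "U = (\<Union>i\<in>I. T (\<phi> i))"
  have phige: "\<And>n. n \<le> \<phi> n" using phi by (rule seq_suble)
  have Ueq: "U = (\<Union>i\<le>m. T (\<phi> (Suc m + i)))"
  proof (intro equalityI subsetI)
    fix a assume "a \<in> U"
    then obtain i where i: "i \<in> I" "a \<in> T (\<phi> i)" unfolding U_def by auto
    then have "a \<in> T (\<phi> (Suc m + (i - Suc m)))" unfolding I_def by simp
    moreover have "i - Suc m \<le> m" using i unfolding I_def M_def by auto
    ultimately show "a \<in> (\<Union>i\<le>m. T (\<phi> (Suc m + i)))" by blast
  next
    fix a assume "a \<in> (\<Union>i\<le>m. T (\<phi> (Suc m + i)))"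
    then obtain i where i: "i \<le> m" "a \<in> T (\<phi> (Suc m + i))" by auto
    have "Suc m + i \<in> I" using i unfolding I_def M_def by auto
    then show "a \<in> U" unfolding U_def using i by blast
  qed
  have UF: "U \<in> F"
  proof -
    have c1: "\<forall>i\<le>m. T (\<phi> (Suc m + i)) \<in> Fb \<and> T (\<phi> (Suc m + i)) \<noteq> {} \<and> finite (T (\<phi> (Suc m + i)))"
      using Tfin by blast
    have c2: "\<forall>i<m. \<forall>a\<in>T (\<phi> (Suc m + i)). \<forall>b\<in>T (\<phi> (Suc m + Suc i)). a < b"
    proof (intro allI impI ballI)
      fix i a b assume "a \<in> T (\<phi> (Suc m + i))" "b \<in> T (\<phi> (Suc m + Suc i))"
      moreover have "\<phi> (Suc m + i) < \<phi> (Suc m + Suc i)" using phi by (simp add: strict_mono_def)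
      ultimately show "a < b" using Tsucc by blast
    qed
    have c3: "\<forall>i\<le>m. \<forall>a\<in>T (\<phi> (Suc m + i)). N \<le> a \<and> Suc m \<le> a"
    proof (intro allI impI ballI)
      fix i a assume "i \<le> m" "a \<in> T (\<phi> (Suc m + i))"
      then have "\<phi> (Suc m + i) \<le> a" using Tge by blast
      moreover have "Suc m + i \<le> \<phi> (Suc m + i)" by (rule phige)
      ultimately show "N \<le> a \<and> Suc m \<le> a" unfolding m_def by linarith
    qed
    show ?thesis unfolding Ueq
      using mp[OF mp[OF mp[OF N[THEN spec[of _ m], THEN spec[of _ "\<lambda>i. T (\<phi> (Suc m + i))"]] c1] c2] c3] .
  qed
  have Uge: "\<forall>a\<in>U. Suc m \<le> a"
  proof
    fix a assume "a \<in> U"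
    then obtain i where "i \<in> I" "a \<in> T (\<phi> i)" unfolding U_def by auto
    then show "Suc m \<le> a" using Tge phige[of i] unfolding I_def by force
  qed
  have yU: "(\<Sum>k\<in>U. \<bar>y k\<bar>) < \<delta>" using L UF Uge unfolding m_def by fastforce
  have aU: "(\<Sum>k\<in>U. \<bar>avg M k - y k\<bar>) < \<delta>"
  proof -
    have "normF F (\<lambda>k. avg M k - y k) < ereal \<delta>" using m1 unfolding M_def m_def by auto
    then have "ereal (\<Sum>k\<in>U. \<bar>avg M k - y k\<bar>) < ereal \<delta>"
      using normF_sum_le[OF UF, of "\<lambda>k. avg M k - y k"] by (metis le_less_trans)
    then show ?thesis by simp
  qed
  define W where "W j k = X (\<phi> j) k - y k" for j k
  have finI: "finite I" unfolding I_def by simp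
  have disj: "\<forall>i\<in>I. \<forall>j\<in>I. i \<noteq> j \<longrightarrow> T (\<phi> i) \<inter> T (\<phi> j) = {}"
  proof (intro ballI impI)
    fix i j :: nat assume "i \<noteq> j"
    then consider "i < j" | "j < i" by linarith
    then show "T (\<phi> i) \<inter> T (\<phi> j) = {}"
    proof cases
      case 1 then have "\<phi> i < \<phi> j" using phi by (simp add: strict_mono_def)
      then show ?thesis using Tsucc by fastforce
    next
      case 2 then have "\<phi> j < \<phi> i" using phi by (simp add: strict_mono_def)
      then show ?thesis using Tsucc by fastforce
    qed
  qed
  have sumU: "\<And>g. (\<Sum>k\<in>U. g k) = (\<Sum>i\<in>I. \<Sum>k\<in>T (\<phi> i). g k)"
    unfolding U_def by (rule sum.UNION_disjoint[OF finI]) (use Tfin disj in auto)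
  have block: "(\<Sum>k\<in>T (\<phi> i). \<bar>\<Sum>j<Suc M. W j k\<bar>) \<ge> \<epsilon>/2 - real (Suc M) * (\<Sum>k\<in>T (\<phi> i). \<bar>y k\<bar>)"
    if iI: "i \<in> I" for i
  proof -
    have iM: "i \<le> M" using iI unfolding I_def by simp
    let ?T = "T (\<phi> i)"
    have pt: "\<bar>\<Sum>j<Suc M. W j k\<bar> \<ge> \<bar>X (\<phi> i) k\<bar> - (\<Sum>j<i. \<bar>X (\<phi> j) k\<bar>) - (\<Sum>j\<in>{i<..M}. \<bar>W j k\<bar>) - real (Suc M) * \<bar>y k\<bar>" for k
      by (rule coord_bound[OF iM]) (simp add: W_def)
    have "(\<Sum>k\<in>?T. \<bar>\<Sum>j<Suc M. W j k\<bar>) \<ge> (\<Sum>k\<in>?T. \<bar>X (\<phi> i) k\<bar> - (\<Sum>j<i. \<bar>X (\<phi> j) k\<bar>) - (\<Sum>j\<in>{i<..M}. \<bar>W j k\<bar>) - real (Suc M) * \<bar>y k\<bar>)"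
      by (rule sum_mono) (rule pt)
    also have "(\<Sum>k\<in>?T. \<bar>X (\<phi> i) k\<bar> - (\<Sum>j<i. \<bar>X (\<phi> j) k\<bar>) - (\<Sum>j\<in>{i<..M}. \<bar>W j k\<bar>) - real (Suc M) * \<bar>y k\<bar>)
       = (\<Sum>k\<in>?T. \<bar>X (\<phi> i) k\<bar>) - (\<Sum>j<i. \<Sum>k\<in>?T. \<bar>X (\<phi> j) k\<bar>) - (\<Sum>j\<in>{i<..M}. \<Sum>k\<in>?T. \<bar>W j k\<bar>) - real (Suc M) * (\<Sum>k\<in>?T. \<bar>y k\<bar>)"
      by (simp add: sum_subtractf sum_distrib_left sum.swap[of _ ?T])
    finally have 1: "(\<Sum>k\<in>?T. \<bar>\<Sum>j<Suc M. W j k\<bar>) \<ge> (\<Sum>k\<in>?T. \<bar>X (\<phi> i) k\<bar>) - (\<Sum>j<i. \<Sum>k\<in>?T. \<bar>X (\<phi> j) k\<bar>) - (\<Sum>j\<in>{i<..M}. \<Sum>k\<in>?T. \<bar>W j k\<bar>) - real (Suc M) * (\<Sum>k\<in>?T. \<bar>y k\<bar>)" .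
    have pw: "(1/2::real)^(\<phi> j) \<le> (1/2)^j" for j by (rule power_decreasing) (auto intro: phige)
    have 2: "(\<Sum>j<i. \<Sum>k\<in>?T. \<bar>X (\<phi> j) k\<bar>) \<le> \<epsilon>/4"
    proof -
      have "(\<Sum>j<i. \<Sum>k\<in>?T. \<bar>X (\<phi> j) k\<bar>) \<le> (\<Sum>j<i. \<epsilon>/8 * (1/2)^j)"
      proof (rule sum_mono)
        fix j assume "j \<in> {..<i}"
        then have "\<phi> j < \<phi> i" using phi by (simp add: strict_mono_def)
        then have "(\<Sum>k\<in>?T. \<bar>X (\<phi> j) k\<bar>) \<le> \<epsilon>/8 * (1/2)^(\<phi> j)" using A by blast
        also have "\<dots> \<le> \<epsilon>/8 * (1/2)^j" using pw[of j] eps by simp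
        finally show "(\<Sum>k\<in>?T. \<bar>X (\<phi> j) k\<bar>) \<le> \<epsilon>/8 * (1/2)^j" .
      qed
      also have "\<dots> = \<epsilon>/8 * (\<Sum>j<i. (1/2)^j)" by (simp add: sum_distrib_left)
      also have "\<dots> \<le> \<epsilon>/8 * 2" using geo_bound[of "{..<i}"] eps by (intro mult_left_mono) auto
      finally show ?thesis by simp
    qed
    have 3: "(\<Sum>j\<in>{i<..M}. \<Sum>k\<in>?T. \<bar>W j k\<bar>) \<le> \<epsilon>/4"
    proof -
      have "(\<Sum>j\<in>{i<..M}. \<Sum>k\<in>?T. \<bar>W j k\<bar>) \<le> (\<Sum>j\<in>{i<..M}. \<epsilon>/8 * (1/2)^j)"
      proof (rule sum_mono)
        fix j assume "j \<in> {i<..M}"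
        then have "\<phi> i < \<phi> j" using phi by (simp add: strict_mono_def)
        then have "(\<Sum>k\<in>?T. \<bar>X (\<phi> j) k - z k\<bar>) \<le> \<epsilon>/8 * (1/2)^(\<phi> j)" using B by blast
        also have "\<dots> \<le> \<epsilon>/8 * (1/2)^j" using pw[of j] eps by simp
        finally show "(\<Sum>k\<in>?T. \<bar>W j k\<bar>) \<le> \<epsilon>/8 * (1/2)^j" by (simp add: W_def yz)
      qed
      also have "\<dots> = \<epsilon>/8 * (\<Sum>j\<in>{i<..M}. (1/2)^j)" by (simp add: sum_distrib_left)
      also have "\<dots> \<le> \<epsilon>/8 * 2" using geo_bound[of "{i<..M}"] eps by (intro mult_left_mono) auto
      finally show ?thesis by simp
    qed
    have 4: "(\<Sum>k\<in>?T. \<bar>X (\<phi> i) k\<bar>) \<ge> \<epsilon>" using big by blast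
    show ?thesis using 1 2 3 4 by linarith
  qed
  have avgW: "avg M k - y k = (\<Sum>j<Suc M. W j k) / real (Suc M)" for k
    by (simp add: avg_def W_def sum_subtractf field_simps)
  have cardI: "card I = Suc m" unfolding I_def M_def by simp
  have e1: "(\<Sum>k\<in>U. \<bar>avg M k - y k\<bar>) = (\<Sum>k\<in>U. \<bar>\<Sum>j<Suc M. W j k\<bar>) / real (Suc M)"
  proof -
    have "\<bar>avg M k - y k\<bar> = \<bar>\<Sum>j<Suc M. W j k\<bar> / real (Suc M)" for k
      unfolding avgW abs_divide by simp
    then have "(\<Sum>k\<in>U. \<bar>avg M k - y k\<bar>) = (\<Sum>k\<in>U. \<bar>\<Sum>j<Suc M. W j k\<bar> / real (Suc M))" by simp
    also have "\<dots> = (\<Sum>k\<in>U. \<bar>\<Sum>j<Suc M. W j k\<bar>) / real (Suc M)" by (simp only: sum_divide_distrib)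
    finally show ?thesis .
  qed
  have e2: "(\<Sum>k\<in>U. \<bar>\<Sum>j<Suc M. W j k\<bar>) \<ge> (\<Sum>i\<in>I. \<epsilon>/2 - real (Suc M) * (\<Sum>k\<in>T (\<phi> i). \<bar>y k\<bar>))"
    unfolding sumU by (rule sum_mono) (rule block)
  have lo: "(\<Sum>k\<in>U. \<bar>avg M k - y k\<bar>) \<ge> (\<Sum>i\<in>I. \<epsilon>/2 - real (Suc M) * (\<Sum>k\<in>T (\<phi> i). \<bar>y k\<bar>)) / real (Suc M)"
    unfolding e1 by (rule divide_right_mono[OF e2]) simp
  have "(\<Sum>i\<in>I. \<epsilon>/2 - real (Suc M) * (\<Sum>k\<in>T (\<phi> i). \<bar>y k\<bar>)) = real (Suc m) * (\<epsilon>/2) - real (Suc M) * (\<Sum>k\<in>U. \<bar>y k\<bar>)"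
    by (simp add: sum_subtractf sum_distrib_left sumU cardI)
  also have "real (Suc M) = 2 * real (Suc m)" unfolding M_def by simp
  finally have "(\<Sum>i\<in>I. \<epsilon>/2 - real (Suc M) * (\<Sum>k\<in>T (\<phi> i). \<bar>y k\<bar>)) / real (Suc M) = \<epsilon>/4 - (\<Sum>k\<in>U. \<bar>y k\<bar>)"
    unfolding M_def by (simp add: field_simps)
  with lo have "(\<Sum>k\<in>U. \<bar>avg M k - y k\<bar>) \<ge> \<epsilon>/4 - (\<Sum>k\<in>U. \<bar>y k\<bar>)" by simp
  with yU aU show False unfolding \<delta>_def using eps by linarith
qed



lemma diag:
  fixes x :: "nat \<Rightarrow> nat \<Rightarrow> real"
  assumes bd: "\<forall>n k. \<bar>x n k\<bar> \<le> Mb"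
  shows "\<exists>\<psi> z. strict_mono \<psi> \<and> (\<forall>k. (\<lambda>n. x (\<psi> n) k) \<longlonglongrightarrow> z k)"
proof -
  interpret S: subseqs "\<lambda>k r. \<exists>l. (\<lambda>i. x (r i) k) \<longlonglongrightarrow> l"
  proof unfold_locales
    fix k and s :: "nat \<Rightarrow> nat" assume "strict_mono s"
    have "bounded (range (\<lambda>i. x (s i) k))" unfolding bounded_iff using bd by auto
    then obtain l r where "strict_mono (r::nat\<Rightarrow>nat)" "((\<lambda>i. x (s i) k) \<circ> r) \<longlonglongrightarrow> l"
      using bounded_imp_convergent_subsequence by blast
    then show "\<exists>r'. strict_mono r' \<and> (\<exists>l. (\<lambda>i. x ((s \<circ> r') i) k) \<longlonglongrightarrow> l)"
      by (auto simp: o_def)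
  qed
  have "\<forall>k. \<exists>l. (\<lambda>n. x (S.diagseq n) k) \<longlonglongrightarrow> l"
  proof
    fix k
    have "\<exists>l. (\<lambda>i. x ((S.diagseq \<circ> (+) (Suc k)) i) k) \<longlonglongrightarrow> l"
    proof (rule S.diagseq_holds)
      fix r s n assume "strict_mono (r::nat\<Rightarrow>nat)" "\<exists>l. (\<lambda>i. x (s i) n) \<longlonglongrightarrow> l"
      then obtain l where "(\<lambda>i. x (s i) n) \<longlonglongrightarrow> l" by blast
      from LIMSEQ_subseq_LIMSEQ[OF this \<open>strict_mono r\<close>]
      show "\<exists>l. (\<lambda>i. x ((s \<circ> r) i) n) \<longlonglongrightarrow> l" by (auto simp: o_def)
    qed
    then obtain l where "(\<lambda>i. x (S.diagseq (Suc k + i)) k) \<longlonglongrightarrow> l" by (auto simp: o_def)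
    then have "(\<lambda>i. x (S.diagseq (i + Suc k)) k) \<longlonglongrightarrow> l" by (simp add: add.commute)
    then have "(\<lambda>i. x (S.diagseq i) k) \<longlonglongrightarrow> l" by (rule LIMSEQ_offset)
    then show "\<exists>l. (\<lambda>n. x (S.diagseq n) k) \<longlonglongrightarrow> l" by blast
  qed
  then have "\<exists>z. \<forall>k. (\<lambda>n. x (S.diagseq n) k) \<longlonglongrightarrow> z k" by (rule choice)
  then obtain z where "\<forall>k. (\<lambda>n. x (S.diagseq n) k) \<longlonglongrightarrow> z k" by blast
  then show ?thesis using S.subseq_diagseq by blast
qed

lemma select:
  fixes F :: "nat set set" and X :: "nat \<Rightarrow> nat \<Rightarrow> real" and T :: "nat \<Rightarrow> nat set"
    and z :: "nat \<Rightarrow> real" and \<epsilon> :: real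
  assumes eps: "0 < \<epsilon>"
    and conv: "\<forall>k. (\<lambda>n. X n k) \<longlonglongrightarrow> z k"
    and Xin: "\<forall>n. inX F (X n)"
    and Tfin: "\<forall>n. finite (T n)"
    and far: "\<forall>L. \<exists>n0. \<forall>n\<ge>n0. T n \<in> F \<and> (\<forall>a\<in>T n. L \<le> a)"
  shows "\<exists>r. strict_mono r \<and>
    (\<forall>p q. p < q \<longrightarrow> (\<Sum>k\<in>T (r q). \<bar>X (r p) k\<bar>) \<le> \<epsilon>/8 * (1/2)^p) \<and>
    (\<forall>p q. p < q \<longrightarrow> (\<Sum>k\<in>T (r p). \<bar>X (r q) k - z k\<bar>) \<le> \<epsilon>/8 * (1/2)^q)"
proof -
  define Q where "Q q m n = ((\<forall>p\<in>{..m}. (\<Sum>k\<in>T n. \<bar>X p k\<bar>) \<le> \<epsilon>/8 * (1/2)^p) \<and>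
      (\<forall>p\<in>{..m}. (\<Sum>k\<in>T p. \<bar>X n k - z k\<bar>) \<le> \<epsilon>/8 * (1/2)^(Suc q)))" for q m n
  have ev: "\<exists>n. m < n \<and> Q q m n" for q m
  proof -
    have e1: "\<forall>\<^sub>F n in sequentially. \<forall>p\<in>{..m}. (\<Sum>k\<in>T n. \<bar>X p k\<bar>) \<le> \<epsilon>/8 * (1/2)^p"
    proof (rule eventually_ball_finite, simp, rule ballI)
      fix p
      have "0 < \<epsilon>/8 * (1/2::real)^p" using eps by simp
      from inX_tail[OF Xin[rule_format, of p] this] obtain L where
        L: "\<forall>t\<in>F. (\<forall>a\<in>t. L \<le> a) \<longrightarrow> (\<Sum>k\<in>t. \<bar>X p k\<bar>) < \<epsilon>/8 * (1/2)^p" by blast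
      obtain n0 where n0: "\<forall>n\<ge>n0. T n \<in> F \<and> (\<forall>a\<in>T n. L \<le> a)" using far by blast
      have "\<forall>n\<ge>n0. (\<Sum>k\<in>T n. \<bar>X p k\<bar>) \<le> \<epsilon>/8 * (1/2)^p"
      proof (intro allI impI)
        fix n assume "n0 \<le> n"
        then have "T n \<in> F" "\<forall>a\<in>T n. L \<le> a" using n0 by auto
        then have "(\<Sum>k\<in>T n. \<bar>X p k\<bar>) < \<epsilon>/8 * (1/2)^p" using L by blast
        then show "(\<Sum>k\<in>T n. \<bar>X p k\<bar>) \<le> \<epsilon>/8 * (1/2)^p" by simp
      qed
      then show "\<forall>\<^sub>F n in sequentially. (\<Sum>k\<in>T n. \<bar>X p k\<bar>) \<le> \<epsilon>/8 * (1/2)^p"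
        unfolding eventually_sequentially by blast
    qed
    have e2: "\<forall>\<^sub>F n in sequentially. \<forall>p\<in>{..m}. (\<Sum>k\<in>T p. \<bar>X n k - z k\<bar>) \<le> \<epsilon>/8 * (1/2)^(Suc q)"
    proof (rule eventually_ball_finite, simp, rule ballI)
      fix p
      have "(\<lambda>n. (\<Sum>k\<in>T p. \<bar>X n k - z k\<bar>)) \<longlonglongrightarrow> 0"
      proof (rule tendsto_null_sum)
        fix k
        have "(\<lambda>n. X n k - z k) \<longlonglongrightarrow> 0" using conv by (simp add: LIM_zero)
        then show "(\<lambda>n. \<bar>X n k - z k\<bar>) \<longlonglongrightarrow> 0" by (rule tendsto_rabs_zero)
      qed
      moreover have "0 < \<epsilon>/8 * (1/2::real)^(Suc q)" using eps by simp
      ultimately have "\<forall>\<^sub>F n in sequentially. (\<Sum>k\<in>T p. \<bar>X n k - z k\<bar>) < \<epsilon>/8 * (1/2)^(Suc q)"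
        by (rule order_tendstoD(2))
      then show "\<forall>\<^sub>F n in sequentially. (\<Sum>k\<in>T p. \<bar>X n k - z k\<bar>) \<le> \<epsilon>/8 * (1/2)^(Suc q)"
        by (rule eventually_mono) simp
    qed
    have "\<forall>\<^sub>F n in sequentially. m < n \<and> Q q m n"
      using eventually_conj[OF eventually_gt_at_top[of m] eventually_conj[OF e1 e2]] unfolding Q_def .
    then obtain n where "m < n \<and> Q q m n" using eventually_sequentially by auto
    then show ?thesis by blast
  qed
  define r where "r = rec_nat 0 (\<lambda>q rq. SOME n. rq < n \<and> Q q rq n)"
  have r0: "r 0 = 0" and rS: "r (Suc q) = (SOME n. r q < n \<and> Q q (r q) n)" for q
    unfolding r_def by simp_all
  have rprop: "r q < r (Suc q) \<and> Q q (r q) (r (Suc q))" for q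
    unfolding rS using someI_ex[OF ev[of "r q" q]] .
  have smr: "strict_mono r" using rprop by (simp add: strict_mono_Suc_iff)
  have pw: "(1/2::real)^(r p) \<le> (1/2)^p" for p by (rule power_decreasing) (auto intro: seq_suble[OF smr])
  show ?thesis
  proof (intro exI[of _ r] conjI smr allI impI)
    fix p q :: nat assume pq: "p < q"
    then obtain q0 where q0: "q = Suc q0" "p \<le> q0" by (cases q) auto
    have rp: "r p \<le> r q0" using smr q0(2) by (simp add: strict_mono_less_eq)
    have Qq: "Q q0 (r q0) (r q)" using rprop[of q0] q0 by simp
    have "(\<Sum>k\<in>T (r q). \<bar>X (r p) k\<bar>) \<le> \<epsilon>/8 * (1/2)^(r p)" using Qq rp unfolding Q_def by auto
    also have "\<dots> \<le> \<epsilon>/8 * (1/2)^p" using pw[of p] eps by simp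
    finally show "(\<Sum>k\<in>T (r q). \<bar>X (r p) k\<bar>) \<le> \<epsilon>/8 * (1/2)^p" .
    show "(\<Sum>k\<in>T (r p). \<bar>X (r q) k - z k\<bar>) \<le> \<epsilon>/8 * (1/2)^q" using Qq rp q0 unfolding Q_def by auto
  qed
qed



theorem proposition3p8:
  fixes fs :: "'o::wellorder \<Rightarrow> nat \<Rightarrow> 'o"
    and \<alpha> \<beta> :: "'o"
    and x :: "nat \<Rightarrow> nat \<Rightarrow> real"
    and s :: "nat \<Rightarrow> nat set"
    and \<epsilon> :: real
  assumes countable_alpha: "countable {g. g \<le> \<alpha>}"
    and fs_ok: "fund_seqs_ok fs \<alpha>"
    and x_in: "\<forall>n. inX (schreier_fam fs \<alpha>) (x n)"
    and x_bdd: "\<exists>M::real. \<forall>n. normF (schreier_fam fs \<alpha>) (x n) \<le> ereal M"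
    and eps_pos: "\<epsilon> > 0"
    and beta_less: "\<beta> < \<alpha>"
    and s_in: "\<forall>n. s n \<in> schreier_fam fs \<beta>"
    and s_block: "\<forall>n. \<forall>a\<in>s n. \<forall>b\<in>s (Suc n). a < b"
    and s_big: "\<forall>n. (\<Sum>k\<in>s n. \<bar>x n k\<bar>) \<ge> \<epsilon>"
  shows "\<not> banach_saks_set (schreier_fam fs \<alpha>) (range x)"
proof
  assume BS: "banach_saks_set (schreier_fam fs \<alpha>) (range x)"
  let ?F = "schreier_fam fs \<alpha>" and ?Fb = "schreier_fam fs \<beta>"
  obtain Mb where Mb: "\<forall>n. normF ?F (x n) \<le> ereal Mb" using x_bdd by blast
  have bd: "\<forall>n k. \<bar>x n k\<bar> \<le> Mb"
  proof (intro allI)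
    fix n k
    have "ereal \<bar>x n k\<bar> \<le> ereal Mb" using normF_coord_le[of "x n" k ?F] Mb by (metis order_trans)
    then show "\<bar>x n k\<bar> \<le> Mb" by simp
  qed
  have sfin: "finite (s n) \<and> s n \<noteq> {}" for n
  proof -
    have "(\<Sum>k\<in>s n. \<bar>x n k\<bar>) \<noteq> 0" using s_big eps_pos by (metis not_le)
    then show ?thesis by (metis sum.empty sum.infinite)
  qed
  have ssucc: "\<forall>a\<in>s p. \<forall>b\<in>s q. a < b" if "p < q" for p q
    using that
  proof (induction q)
    case 0 then show ?case by simp
  next
    case (Suc q)
    show ?case
    proof (cases "p = q")
      case True then show ?thesis using s_block by simp
    next
      case False
      then have "p < q" using Suc.prems by simp
      then have IH: "\<forall>a\<in>s p. \<forall>b\<in>s q. a < b" using Suc.IH by blast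
      obtain c where c: "c \<in> s q" using sfin[of q] by blast
      show ?thesis using IH c s_block by (meson order.strict_trans)
    qed
  qed
  have sge: "\<forall>a\<in>s n. n \<le> a" for n
  proof (induction n)
    case 0 then show ?case by simp
  next
    case (Suc n)
    obtain c where c: "c \<in> s n" using sfin[of n] by blast
    then show ?case using Suc.IH s_block by (meson le_less_trans less_eq_Suc_le)
  qed
  obtain N where N: "\<forall>n ss. (\<forall>i\<le>n. ss i \<in> ?Fb \<and> ss i \<noteq> {} \<and> finite (ss i)) \<longrightarrow>
     (\<forall>i<n. \<forall>a\<in>ss i. \<forall>b\<in>ss (Suc i). a < b) \<longrightarrow>
     (\<forall>i\<le>n. \<forall>a\<in>ss i. N \<le> a \<and> Suc n \<le> a) \<longrightarrow> (\<Union>i\<le>n. ss i) \<in> ?F"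
    using comb_final[OF fs_ok beta_less] by blast
  have single: "s n \<in> ?F" if "\<forall>a\<in>s n. N \<le> a \<and> 1 \<le> a" for n
  proof -
    have c1: "\<forall>i\<le>0. (\<lambda>_. s n) i \<in> ?Fb \<and> (\<lambda>_. s n) i \<noteq> {} \<and> finite ((\<lambda>_. s n) i)"
      using s_in sfin by auto
    have c2: "\<forall>i<0. \<forall>a\<in>(\<lambda>_. s n) i. \<forall>b\<in>(\<lambda>_. s n) (Suc i). a < b" by simp
    have c3: "\<forall>i\<le>0. \<forall>a\<in>(\<lambda>_. s n) i. N \<le> a \<and> Suc 0 \<le> a" using that by simp
    show ?thesis
      using mp[OF mp[OF mp[OF N[THEN spec[of _ 0], THEN spec[of _ "\<lambda>_. s n"]] c1] c2] c3] by simp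
  qed
  obtain \<psi> z where psi: "strict_mono \<psi>" and conv: "\<forall>k. (\<lambda>n. x (\<psi> n) k) \<longlonglongrightarrow> z k"
    using diag[OF bd] by blast
  have psige: "n \<le> \<psi> n" for n using psi by (rule seq_suble)
  have far: "\<forall>L. \<exists>n0. \<forall>n\<ge>n0. s (\<psi> n) \<in> ?F \<and> (\<forall>a\<in>s (\<psi> n). L \<le> a)"
  proof
    fix L
    show "\<exists>n0. \<forall>n\<ge>n0. s (\<psi> n) \<in> ?F \<and> (\<forall>a\<in>s (\<psi> n). L \<le> a)"
    proof (intro exI[of _ "max (max N 1) L"] allI impI)
      fix n assume n: "max (max N 1) L \<le> n"
      have ge: "\<forall>a\<in>s (\<psi> n). n \<le> a" using sge[of "\<psi> n"] psige[of n] by auto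
      then have "s (\<psi> n) \<in> ?F" using n by (intro single) auto
      then show "s (\<psi> n) \<in> ?F \<and> (\<forall>a\<in>s (\<psi> n). L \<le> a)" using ge n by auto
    qed
  qed
  obtain r where r: "strict_mono r"
    and rA: "\<forall>p q. p < q \<longrightarrow> (\<Sum>k\<in>s (\<psi> (r q)). \<bar>x (\<psi> (r p)) k\<bar>) \<le> \<epsilon>/8 * (1/2)^p"
    and rB: "\<forall>p q. p < q \<longrightarrow> (\<Sum>k\<in>s (\<psi> (r p)). \<bar>x (\<psi> (r q)) k - z k\<bar>) \<le> \<epsilon>/8 * (1/2)^q"
    using select[OF eps_pos conv _ _ far] x_in sfin by blast
  define X where "X n = x (\<psi> (r n))" for n
  define T where "T n = s (\<psi> (r n))" for n
  have pr: "strict_mono (\<lambda>n. \<psi> (r n))" using psi r by (simp add: strict_mono_def)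
  from BS have "\<exists>\<phi> y. strict_mono \<phi> \<and> inX ?F y \<and>
           ((\<lambda>m. normF ?F (\<lambda>k. (\<Sum>i<Suc m. X (\<phi> i) k) / real (Suc m) - y k)) \<longlonglongrightarrow> 0)"
    unfolding banach_saks_set_def X_def by (elim allE[of _ X]) (auto simp: X_def)
  then obtain \<phi> y where phi: "strict_mono \<phi>" and yX: "inX ?F y"
    and lim: "(\<lambda>m. normF ?F (\<lambda>k. (\<Sum>i<Suc m. X (\<phi> i) k) / real (Suc m) - y k)) \<longlonglongrightarrow> 0" by blast
  show False
  proof (rule contra[OF eps_pos _ _ _ _ _ _ _ _ phi yX lim, where T = T and z = z and Fb = ?Fb])
    show "\<forall>k. (\<lambda>n. X n k) \<longlonglongrightarrow> z k"
    proof
      fix k show "(\<lambda>n. X n k) \<longlonglongrightarrow> z k"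
        using LIMSEQ_subseq_LIMSEQ[OF conv[rule_format, of k] r] by (simp add: X_def o_def)
    qed
    show "\<forall>p q. p < q \<longrightarrow> (\<Sum>k\<in>T q. \<bar>X p k\<bar>) \<le> \<epsilon>/8 * (1/2)^p" using rA by (simp add: X_def T_def)
    show "\<forall>p q. p < q \<longrightarrow> (\<Sum>k\<in>T p. \<bar>X q k - z k\<bar>) \<le> \<epsilon>/8 * (1/2)^q" using rB by (simp add: X_def T_def)
    show "\<forall>n. (\<Sum>k\<in>T n. \<bar>X n k\<bar>) \<ge> \<epsilon>" using s_big by (simp add: X_def T_def)
    show "\<forall>n. finite (T n) \<and> T n \<noteq> {} \<and> T n \<in> ?Fb" using sfin s_in by (simp add: T_def)
    show "\<forall>p q. p < q \<longrightarrow> (\<forall>a\<in>T p. \<forall>b\<in>T q. a < b)"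
    proof (intro allI impI)
      fix p q :: nat assume "p < q"
      then have "\<psi> (r p) < \<psi> (r q)" using pr by (simp add: strict_mono_def)
      then show "\<forall>a\<in>T p. \<forall>b\<in>T q. a < b" using ssucc unfolding T_def by blast
    qed
    show "\<forall>n. \<forall>a\<in>T n. n \<le> a"
    proof (intro allI ballI)
      fix n a assume "a \<in> T n"
      then have "\<psi> (r n) \<le> a" using sge unfolding T_def by blast
      moreover have "n \<le> \<psi> (r n)" using seq_suble[OF pr] by simp
      ultimately show "n \<le> a" by simp
    qed
    show "\<exists>N. \<forall>n ss. (\<forall>i\<le>n. ss i \<in> ?Fb \<and> ss i \<noteq> {} \<and> finite (ss i)) \<longrightarrow>
     (\<forall>i<n. \<forall>a\<in>ss i. \<forall>b\<in>ss (Suc i). a < b) \<longrightarrow>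
     (\<forall>i\<le>n. \<forall>a\<in>ss i. N \<le> a \<and> Suc n \<le> a) \<longrightarrow> (\<Union>i\<le>n. ss i) \<in> ?F" using N by blast
  qed
qed


end
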